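(* Let $(S,\mathsf d)$ be a complete separable metric space and $\mathbf p$ a Borel probability measure on $S$; let $\varepsilon>0$, $k\in\mathbb{N}$, and let $X_1,\dots,X_k$ be i.i.d. with law $\mathbf p$. Let $C_1,\dots,C_k$ be pairwise disjoint sets with $C_i\subset B(X_i,\varepsilon)$ and $\bigcup_iC_i=\bigcup_iB(X_i,\varepsilon)$, and set \[\mathbf p^{k,\varepsilon}:=\frac{1}{\sum_{i=1}^k\mathbf p(C_i)}\sum_{i=1}^k\mathbf p(C_i)\delta_{X_i}.\] Then $\mathbb E[\mathrm d_{BL}(\mathbf p,\mathbf p^{k,\varepsilon})]\le\varepsilon\,p_{\varepsilon,k}+2(1-p_{\varepsilon,k})$.
   Context: $B(x,\varepsilon)=\{y:\mathsf d(x,y)<\varepsilon\}$. $p_{\varepsilon,k}:=\mathbb P(X\in\bigcup_{i=1}^kB(X_i,\varepsilon))$ with $X,X_1,\dots,X_k$ i.i.d. with law $\mathbf p$. For bounded Lipschitz $\varphi$, $\|\varphi\|_{BL}:=\|\varphi\|_\infty+\mathrm{Lip}(\varphi)$, and $\mathrm d_{BL}(\mathbf p,\mathbf p'):=\sup\{|\int\varphi\,d\mathbf p-\int\varphi\,d\mathbf p'|:\|\varphi\|_{BL}\le1\}$. *)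

theory Defs
  imports "HOL-Probability.Probability"
begin

definition sup_norm :: "('a \<Rightarrow> real) \<Rightarrow> real" where
  "sup_norm \<phi> = (SUP x. \<bar>\<phi> x\<bar>)"

definition lip_const :: "('a::metric_space \<Rightarrow> real) \<Rightarrow> real" where
  "lip_const \<phi> = Inf {L. lipschitz_on L UNIV \<phi>}"

definition BL_norm :: "('a::metric_space \<Rightarrow> real) \<Rightarrow> real" where
  "BL_norm \<phi> = sup_norm \<phi> + lip_const \<phi>"

definition bounded_lipschitz :: "('a::metric_space \<Rightarrow> real) \<Rightarrow> bool" where
  "bounded_lipschitz \<phi> \<longleftrightarrow> bounded (range \<phi>) \<and> (\<exists>L. lipschitz_on L UNIV \<phi>)"

definition d_BL :: "'a::metric_space measure \<Rightarrow> 'a measure \<Rightarrow> real" where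
  "d_BL P Q = (SUP \<phi> \<in> {\<phi>. bounded_lipschitz \<phi> \<and> BL_norm \<phi> \<le> 1}.
                 \<bar>(\<integral>x. \<phi> x \<partial>P) - (\<integral>x. \<phi> x \<partial>Q)\<bar>)"

definition weighted_diracs :: "nat \<Rightarrow> (nat \<Rightarrow> real) \<Rightarrow> (nat \<Rightarrow> 'a::topological_space) \<Rightarrow> 'a measure" where
  "weighted_diracs k w x =
     measure_of (space borel) (sets borel) (\<lambda>A. \<Sum>i<k. ennreal (w i) * indicator A (x i))"

text \<open>p_{eps,k} = P(X_0 \<in> \<Union>_{i=1..k} B(X_i,eps)) for X_0,...,X_k i.i.d. with law p
  (realised on the canonical product space).\<close>
definition p_cover :: "'a::metric_space measure \<Rightarrow> real \<Rightarrow> nat \<Rightarrow> real" where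
  "p_cover p \<epsilon> k = measure (PiM {..k} (\<lambda>_. p))
      {\<omega> \<in> space (PiM {..k} (\<lambda>_. p)). \<omega> 0 \<in> (\<Union>i\<in>{1..k}. ball (\<omega> i) \<epsilon>)}"

end

theory Submission
  imports Defs
begin

lemma wd_eq:
  fixes x :: "nat \<Rightarrow> 'a::topological_space"
  shows "weighted_diracs k w x = distr (point_measure {..<k} (\<lambda>i. ennreal (w i))) borel x"
proof -
  let ?N = "distr (point_measure {..<k} (\<lambda>i. ennreal (w i))) borel x"
  have "?N = measure_of (space ?N) (sets ?N) (emeasure ?N)"
    by (rule measure_of_of_measure[symmetric])
  also have "\<dots> = measure_of (space borel) (sets borel) (emeasure ?N)" by simp
  also have "\<dots> = weighted_diracs k w x"
    unfolding weighted_diracs_def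
  proof (rule measure_of_eq)
    show "sets borel \<subseteq> Pow (space borel)" by simp
    fix a :: "'a set" assume "a \<in> sigma_sets (space borel) (sets borel)"
    then have a: "a \<in> sets borel" by (metis sets.sigma_sets_eq space_borel)
    have "emeasure ?N a = emeasure (point_measure {..<k} (\<lambda>i. ennreal (w i))) (x -` a \<inter> {..<k})"
      using a by (simp add: emeasure_distr space_point_measure)
    also have "\<dots> = (\<Sum>i\<in>x -` a \<inter> {..<k}. ennreal (w i))"
      by (subst emeasure_point_measure_finite) auto
    also have "\<dots> = (\<Sum>i\<in>{..<k} \<inter> {i. x i \<in> a}. ennreal (w i))"
      by (rule arg_cong[where f="\<lambda>S. sum _ S"]) auto
    also have "\<dots> = (\<Sum>i<k. ennreal (w i) * indicator a (x i))"
      by (simp add: sum.inter_restrict indicator_def)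
    finally show "emeasure ?N a = (\<Sum>i<k. ennreal (w i) * indicator a (x i))" .
  qed
  finally show ?thesis by simp
qed

lemma wd_integral:
  fixes x :: "nat \<Rightarrow> 'a::topological_space"
  assumes w: "\<And>i. i < k \<Longrightarrow> w i \<ge> 0" and f: "f \<in> borel_measurable borel"
  shows "(\<integral>y. f y \<partial>weighted_diracs k w x) = (\<Sum>i<k. w i * f (x i))"
proof -
  have "(\<integral>y. f y \<partial>weighted_diracs k w x) = (\<integral>i. f (x i) \<partial>point_measure {..<k} (\<lambda>i. ennreal (w i)))"
    unfolding wd_eq using f by (subst integral_distr) auto
  also have "\<dots> = (\<Sum>i<k. w i * f (x i))"
    using w by (subst lebesgue_integral_point_measure_finite) auto
  finally show ?thesis .
qed

lemma BL_facts:
  fixes \<phi> :: "'a::metric_space \<Rightarrow> real"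
  assumes bl: "bounded_lipschitz \<phi>" and n: "BL_norm \<phi> \<le> 1"
  shows "\<And>y. \<bar>\<phi> y\<bar> \<le> 1" "\<And>y z. \<bar>\<phi> y - \<phi> z\<bar> \<le> dist y z" "continuous_on UNIV \<phi>"
proof -
  obtain L where L: "lipschitz_on L UNIV \<phi>" using bl unfolding bounded_lipschitz_def by auto
  have bdd: "bdd_above (range (\<lambda>x. \<bar>\<phi> x\<bar>))"
    using bl unfolding bounded_lipschitz_def bounded_iff bdd_above_def by auto
  have sup: "\<bar>\<phi> y\<bar> \<le> sup_norm \<phi>" for y
    unfolding sup_norm_def by (rule cSUP_upper[OF _ bdd]) auto
  have ne: "{L. lipschitz_on L UNIV \<phi>} \<noteq> {}" using L by auto
  have bddb: "bdd_below {L. lipschitz_on L UNIV \<phi>}"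
    by (rule bdd_belowI[of _ 0]) (auto simp: lipschitz_on_def)
  have lip0: "lip_const \<phi> \<ge> 0" unfolding lip_const_def
    by (rule cInf_greatest[OF ne]) (auto simp: lipschitz_on_def)
  have sn0: "sup_norm \<phi> \<ge> 0" using sup[of undefined] by linarith
  have le1: "lip_const \<phi> \<le> 1" "sup_norm \<phi> \<le> 1 - lip_const \<phi>" using n sn0 unfolding BL_norm_def by auto
  show "\<bar>\<phi> y\<bar> \<le> 1" for y using sup[of y] le1 lip0 by linarith
  have lipc: "\<bar>\<phi> y - \<phi> z\<bar> \<le> lip_const \<phi> * dist y z" for y z
  proof (rule field_le_epsilon)
    fix e :: real assume e: "e > 0"
    have "dist y z \<ge> 0" by simp
    show "\<bar>\<phi> y - \<phi> z\<bar> \<le> lip_const \<phi> * dist y z + e"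
    proof (cases "dist y z = 0")
      case True then show ?thesis using e by simp
    next
      case False
      then have dpos: "dist y z > 0" by simp
      have "lip_const \<phi> < lip_const \<phi> + e / dist y z" using e dpos by simp
      then obtain L' where L': "lipschitz_on L' UNIV \<phi>" "L' < lip_const \<phi> + e / dist y z"
        unfolding lip_const_def using cInf_lessD[OF ne] by blast
      have "\<bar>\<phi> y - \<phi> z\<bar> \<le> L' * dist y z" using L' by (auto simp: lipschitz_on_def dist_real_def)
      also have "\<dots> \<le> (lip_const \<phi> + e / dist y z) * dist y z"
        using L' dpos by (intro mult_right_mono) auto
      also have "\<dots> = lip_const \<phi> * dist y z + e" using dpos by (simp add: field_simps)
      finally show ?thesis .
    qed
  qed
  show "\<bar>\<phi> y - \<phi> z\<bar> \<le> dist y z" for y z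
    using lipc[of y z] le1 lip0 mult_right_mono[OF le1(1), of "dist y z"] by simp
  show "continuous_on UNIV \<phi>" using L by (rule lipschitz_on_continuous_on)
qed

lemma abs_int_bound:
  fixes f g :: "'a \<Rightarrow> real"
  assumes "integrable M f" "integrable M g" "\<And>x. x \<in> space M \<Longrightarrow> \<bar>f x\<bar> \<le> g x"
  shows "\<bar>\<integral>x. f x \<partial>M\<bar> \<le> (\<integral>x. g x \<partial>M)"
proof -
  have "\<bar>\<integral>x. f x \<partial>M\<bar> \<le> (\<integral>x. \<bar>f x\<bar> \<partial>M)" using integral_norm_bound[of M f] by simp
  also have "\<dots> \<le> (\<integral>x. g x \<partial>M)" using assms by (intro integral_mono) auto
  finally show ?thesis .
qed

lemma zero_BL: "(\<lambda>_. 0::real) \<in> {\<phi>::'a::metric_space \<Rightarrow> real. bounded_lipschitz \<phi> \<and> BL_norm \<phi> \<le> 1}"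
proof -
  have "sup_norm (\<lambda>_::'a. 0::real) = 0" unfolding sup_norm_def by simp
  moreover have "{L. lipschitz_on L UNIV (\<lambda>_::'a. 0::real)} = {0..}"
    by (auto simp: lipschitz_on_def)
  then have "lip_const (\<lambda>_::'a. 0::real) = 0" unfolding lip_const_def by simp
  ultimately show ?thesis
    by (auto simp: bounded_lipschitz_def BL_norm_def intro: lipschitz_intros)
qed

lemma pointwise_bound:
  fixes p :: "'a::metric_space measure" and x :: "nat \<Rightarrow> 'a"
  assumes P: "prob_space p" and pb: "sets p = sets borel" and eps: "\<epsilon> \<ge> 0"
    and Cs: "\<And>i. i < k \<Longrightarrow> C i \<in> sets borel"
    and Cd: "\<And>i j. i < k \<Longrightarrow> j < k \<Longrightarrow> i \<noteq> j \<Longrightarrow> C i \<inter> C j = {}"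
    and Cb: "\<And>i. i < k \<Longrightarrow> C i \<subseteq> ball (x i) \<epsilon>"
  shows "d_BL p (weighted_diracs k (\<lambda>i. measure p (C i) / (\<Sum>j<k. measure p (C j))) x)
         \<le> \<epsilon> * (\<Sum>j<k. measure p (C j)) + 2 * (1 - (\<Sum>j<k. measure p (C j)))"
proof -
  interpret prob_space p by (rule P)
  define m where "m = (\<Sum>j<k. measure p (C j))"
  have m0: "m \<ge> 0" unfolding m_def by (simp add: sum_nonneg)
  have Cp: "C i \<in> sets p" if "i < k" for i using Cs[OF that] pb by simp
  define sI where "sI y = (\<Sum>i<k. indicator (C i) y :: real)" for y
  have sI: "sI y = indicator (\<Union>i<k. C i) y" for y
    unfolding sI_def
    by (rule indicator_UN_disjoint[symmetric]) (auto simp: disjoint_family_on_def Cd)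
  have sI01: "0 \<le> sI y" "sI y \<le> 1" for y unfolding sI by (auto simp: indicator_def)
  have sIm[measurable]: "sI \<in> borel_measurable p" unfolding sI_def using Cp by measurable
  have int_sI: "(\<integral>y. sI y \<partial>p) = m"
  proof -
    have "(\<integral>y. sI y \<partial>p) = (\<Sum>i<k. \<integral>y. indicator (C i) y \<partial>p)"
      unfolding sI_def using Cp
      by (intro Bochner_Integration.integral_sum) (auto intro!: integrable_real_indicator simp: emeasure_eq_measure)
    also have "\<dots> = m" unfolding m_def using Cp by (intro sum.cong) auto
    finally show ?thesis .
  qed
  have sIi: "integrable p sI"
    using sI01 by (intro integrable_const_bound[where B=1]) auto
  have m1: "m \<le> 1"
  proof -
    have "(\<integral>y. sI y \<partial>p) \<le> (\<integral>y. 1 \<partial>p)" using sI01 sIi by (intro integral_mono) auto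
    then show ?thesis using int_sI by (simp add: prob_space)
  qed
  show ?thesis
    unfolding d_BL_def m_def[symmetric]
  proof (rule cSUP_least)
    show "{\<phi>. bounded_lipschitz \<phi> \<and> BL_norm \<phi> \<le> 1} \<noteq> {}" using zero_BL by blast
  next
    fix \<phi> :: "'a \<Rightarrow> real"
    assume "\<phi> \<in> {\<phi>. bounded_lipschitz \<phi> \<and> BL_norm \<phi> \<le> 1}"
    then have bl: "bounded_lipschitz \<phi>" "BL_norm \<phi> \<le> 1" by auto
    note F = BL_facts[OF bl]
    have phib: "\<phi> \<in> borel_measurable borel"
      using F(3) by (rule borel_measurable_continuous_onI)
    then have phim[measurable]: "\<phi> \<in> borel_measurable p" using pb by (simp cong: measurable_cong_sets)
    have intb: "integrable p f" if "f \<in> borel_measurable p" "\<And>y. \<bar>f y\<bar> \<le> B" for f and B :: real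
      using that by (intro integrable_const_bound[where B=B]) auto
    have i1: "integrable p (\<lambda>y. \<phi> (x i) * indicator (C i) y)" if "i < k" for i
    proof (rule intb[of _ 1])
      show "(\<lambda>y. \<phi> (x i) * indicator (C i) y) \<in> borel_measurable p" using Cp[OF that] by measurable
      fix y show "\<bar>\<phi> (x i) * indicator (C i) y\<bar> \<le> 1" using F(1)[of "x i"] by (auto simp: indicator_def)
    qed
    have i2: "integrable p (\<lambda>y. (\<phi> y - \<phi> (x i)) * indicator (C i) y)" if "i < k" for i
    proof (rule intb[of _ 2])
      show "(\<lambda>y. (\<phi> y - \<phi> (x i)) * indicator (C i) y) \<in> borel_measurable p" using Cp[OF that] by measurable
      fix y have "\<bar>\<phi> y - \<phi> (x i)\<bar> \<le> 2" using F(1)[of y] F(1)[of "x i"] by linarith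
      then show "\<bar>(\<phi> y - \<phi> (x i)) * indicator (C i) y\<bar> \<le> 2" by (auto simp: indicator_def)
    qed
    have i3: "integrable p (\<lambda>y. \<phi> y * (1 - sI y))"
    proof (rule intb[of _ 1])
      show "(\<lambda>y. \<phi> y * (1 - sI y)) \<in> borel_measurable p" by measurable
      fix y show "\<bar>\<phi> y * (1 - sI y)\<bar> \<le> 1" using F(1)[of y] sI01[of y]
        by (simp add: abs_mult mult_le_one)
    qed
    define T where "T = (\<Sum>i<k. measure p (C i) * \<phi> (x i))"
    define A where "A = (\<Sum>i<k. \<integral>y. (\<phi> y - \<phi> (x i)) * indicator (C i) y \<partial>p)"
    define B where "B = (\<integral>y. \<phi> y * (1 - sI y) \<partial>p)"
    have decomp: "(\<integral>y. \<phi> y \<partial>p) = T + A + B"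
    proof -
      have eq: "\<phi> y = (\<Sum>i<k. \<phi> (x i) * indicator (C i) y) + (\<Sum>i<k. (\<phi> y - \<phi> (x i)) * indicator (C i) y)
                  + \<phi> y * (1 - sI y)" for y
      proof -
        have e1: "(\<Sum>i<k. \<phi> (x i) * indicator (C i) y) + (\<Sum>i<k. (\<phi> y - \<phi> (x i)) * indicator (C i) y) = \<phi> y * sI y"
          unfolding sI_def sum.distrib[symmetric] sum_distrib_left by (intro sum.cong) (auto simp: algebra_simps)
        then show ?thesis by (simp add: right_diff_distrib)
      qed
      have "(\<integral>y. \<phi> y \<partial>p) = (\<integral>y. (\<Sum>i<k. \<phi> (x i) * indicator (C i) y) + (\<Sum>i<k. (\<phi> y - \<phi> (x i)) * indicator (C i) y)
                  + \<phi> y * (1 - sI y) \<partial>p)" by (intro Bochner_Integration.integral_cong refl eq)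
      also have "\<dots> = (\<Sum>i<k. \<integral>y. \<phi> (x i) * indicator (C i) y \<partial>p) + A + B"
      proof -
        have s1: "integrable p (\<lambda>y. \<Sum>i<k. \<phi> (x i) * indicator (C i) y)"
          using i1 by (intro Bochner_Integration.integrable_sum) auto
        have s2: "integrable p (\<lambda>y. \<Sum>i<k. (\<phi> y - \<phi> (x i)) * indicator (C i) y)"
          using i2 by (intro Bochner_Integration.integrable_sum) auto
        have "(\<integral>y. (\<Sum>i<k. \<phi> (x i) * indicator (C i) y) + (\<Sum>i<k. (\<phi> y - \<phi> (x i)) * indicator (C i) y)
                  + \<phi> y * (1 - sI y) \<partial>p) = (\<integral>y. (\<Sum>i<k. \<phi> (x i) * indicator (C i) y) \<partial>p)
               + (\<integral>y. (\<Sum>i<k. (\<phi> y - \<phi> (x i)) * indicator (C i) y) \<partial>p) + B"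
          unfolding B_def using s1 s2 i3 by (simp add: Bochner_Integration.integral_add)
        also have "(\<integral>y. (\<Sum>i<k. \<phi> (x i) * indicator (C i) y) \<partial>p) = (\<Sum>i<k. \<integral>y. \<phi> (x i) * indicator (C i) y \<partial>p)"
          using i1 by (intro Bochner_Integration.integral_sum) auto
        also have "(\<integral>y. (\<Sum>i<k. (\<phi> y - \<phi> (x i)) * indicator (C i) y) \<partial>p) = A"
          unfolding A_def using i2 by (intro Bochner_Integration.integral_sum) auto
        finally show ?thesis .
      qed
      also have "(\<Sum>i<k. \<integral>y. \<phi> (x i) * indicator (C i) y \<partial>p) = T"
        unfolding T_def using Cp by (intro sum.cong) (auto simp: mult.commute)
      finally show ?thesis .
    qed
    have Tb: "\<bar>T\<bar> \<le> m"
    proof -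
      have "\<bar>T\<bar> \<le> (\<Sum>i<k. \<bar>measure p (C i) * \<phi> (x i)\<bar>)" unfolding T_def by (rule sum_abs)
      also have "\<dots> \<le> (\<Sum>i<k. measure p (C i))"
        using F(1) by (intro sum_mono) (simp add: abs_mult mult_left_le)
      finally show ?thesis unfolding m_def .
    qed
    have Ab: "\<bar>A\<bar> \<le> \<epsilon> * m"
    proof -
      have "\<bar>A\<bar> \<le> (\<Sum>i<k. \<bar>\<integral>y. (\<phi> y - \<phi> (x i)) * indicator (C i) y \<partial>p\<bar>)" unfolding A_def by (rule sum_abs)
      also have "\<dots> \<le> (\<Sum>i<k. \<epsilon> * measure p (C i))"
      proof (rule sum_mono)
        fix i assume "i \<in> {..<k}" then have i: "i < k" by simp
        have pt: "\<bar>(\<phi> y - \<phi> (x i)) * indicator (C i) y\<bar> \<le> \<epsilon> * indicator (C i) y" for y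
        proof (cases "y \<in> C i")
          case True
          then have "dist y (x i) < \<epsilon>" using Cb[OF i] by (auto simp: dist_commute)
          then show ?thesis using F(2)[of y "x i"] True by simp
        qed simp
        have ii: "integrable p (\<lambda>y. \<epsilon> * indicator (C i) y)"
        proof (rule intb[of _ "\<epsilon>"])
          show "(\<lambda>y. \<epsilon> * indicator (C i) y) \<in> borel_measurable p" using Cp[OF i] by measurable
          fix y show "\<bar>\<epsilon> * indicator (C i) y\<bar> \<le> \<epsilon>" using eps by (auto simp: indicator_def)
        qed
        have "\<bar>\<integral>y. (\<phi> y - \<phi> (x i)) * indicator (C i) y \<partial>p\<bar> \<le> (\<integral>y. \<epsilon> * indicator (C i) y \<partial>p)"
          using i2[OF i] ii pt by (intro abs_int_bound) auto
        also have "\<dots> = \<epsilon> * measure p (C i)" using Cp[OF i] by simp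
        finally show "\<bar>\<integral>y. (\<phi> y - \<phi> (x i)) * indicator (C i) y \<partial>p\<bar> \<le> \<epsilon> * measure p (C i)" .
      qed
      finally show ?thesis unfolding m_def by (simp add: sum_distrib_left)
    qed
    have Bb: "\<bar>B\<bar> \<le> 1 - m"
    proof -
      have "\<bar>B\<bar> \<le> (\<integral>y. 1 - sI y \<partial>p)"
      proof -
        have ii: "integrable p (\<lambda>y. 1 - sI y)" using sIi by simp
        show "\<bar>B\<bar> \<le> (\<integral>y. 1 - sI y \<partial>p)" unfolding B_def
          using i3 ii F(1) sI01 by (intro abs_int_bound) (auto simp: abs_mult intro!: mult_left_le_one_le)
      qed
      also have "\<dots> = 1 - m" using int_sI sIi by (simp add: prob_space)
      finally show ?thesis .
    qed
    have wint: "(\<integral>y. \<phi> y \<partial>weighted_diracs k (\<lambda>i. measure p (C i) / m) x) = T / m"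
      unfolding T_def using m0 by (subst wd_integral[OF _ phib]) (auto simp: sum_divide_distrib)
    show "\<bar>(\<integral>y. \<phi> y \<partial>p) - (\<integral>y. \<phi> y \<partial>weighted_diracs k (\<lambda>i. measure p (C i) / m) x)\<bar>
          \<le> \<epsilon> * m + 2 * (1 - m)"
    proof (cases "m = 0")
      case True
      then have "T = 0" using Tb by simp
      then show ?thesis using True decomp wint Ab Bb by simp
    next
      case False
      then have mp: "m > 0" using m0 by simp
      have "\<bar>T - T / m\<bar> = \<bar>T\<bar> * (1 - m) / m"
      proof -
        have "T - T / m = - (T * (1 - m) / m)" using mp by (simp add: field_simps)
        then show ?thesis using m1 mp by (simp add: abs_mult)
      qed
      also have "\<dots> \<le> m * (1 - m) / m" using Tb m1 mp by (intro divide_right_mono mult_right_mono) auto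
      also have "\<dots> = 1 - m" using mp by simp
      finally have "\<bar>T - T / m\<bar> \<le> 1 - m" .
      then show ?thesis unfolding decomp wint using Ab Bb by (simp add: abs_le_iff)
    qed
  qed
qed


theorem lemma3p11:
  fixes p :: "'a::polish_space measure"
    and M :: "'b measure"
    and X :: "nat \<Rightarrow> 'b \<Rightarrow> 'a"
    and C :: "'b \<Rightarrow> nat \<Rightarrow> 'a set"
    and \<epsilon> :: real and k :: nat
  assumes p_prob: "prob_space p" and p_borel: "sets p = sets borel"
    and M_prob: "prob_space M"
    and eps: "\<epsilon> > 0"
    and X_meas: "\<And>i. i < k \<Longrightarrow> X i \<in> measurable M borel"
    and X_indep: "prob_space.indep_vars M (\<lambda>_. borel) X {..<k}"
    and X_law: "\<And>i. i < k \<Longrightarrow> distr M borel (X i) = p"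
    and C_sets: "\<And>\<omega> i. \<omega> \<in> space M \<Longrightarrow> i < k \<Longrightarrow> C \<omega> i \<in> sets borel"
    and C_disj: "\<And>\<omega> i j. \<omega> \<in> space M \<Longrightarrow> i < k \<Longrightarrow> j < k \<Longrightarrow> i \<noteq> j \<Longrightarrow> C \<omega> i \<inter> C \<omega> j = {}"
    and C_sub: "\<And>\<omega> i. \<omega> \<in> space M \<Longrightarrow> i < k \<Longrightarrow> C \<omega> i \<subseteq> ball (X i \<omega>) \<epsilon>"
    and C_union: "\<And>\<omega>. \<omega> \<in> space M \<Longrightarrow> (\<Union>i<k. C \<omega> i) = (\<Union>i<k. ball (X i \<omega>) \<epsilon>)"
  shows "(\<integral>\<^sup>+ \<omega>. ennreal (d_BL p
            (weighted_diracs k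
               (\<lambda>i. measure p (C \<omega> i) / (\<Sum>j<k. measure p (C \<omega> j)))
               (\<lambda>i. X i \<omega>))) \<partial>M)
         \<le> ennreal (\<epsilon> * p_cover p \<epsilon> k + 2 * (1 - p_cover p \<epsilon> k))"
proof -
  interpret P: prob_space p by (rule p_prob)
  interpret MP: prob_space M by (rule M_prob)
  have space_p: "space p = UNIV" using sets_eq_imp_space_eq[OF p_borel] by simp
  have Xp: "X i \<in> measurable M p" if "i < k" for i using X_meas[OF that] by (simp add: measurable_cong_sets[OF refl p_borel])
  define N where "N = PiM {1..k} (\<lambda>_. p)"
  interpret PN: prob_space N unfolding N_def by (intro prob_space_PiM p_prob)
  define h where "h f = measure p (\<Union>i\<in>{1..k}. ball (f i) \<epsilon>)" for f :: "nat \<Rightarrow> 'a"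
  define G where "G f = \<epsilon> * h f + 2 * (1 - h f)" for f
  define Y where "Y \<omega> = (\<lambda>i\<in>{1..k}. X (i - 1) \<omega>)" for \<omega>
  have h01: "0 \<le> h f" "h f \<le> 1" for f unfolding h_def by auto
  have pw: "d_BL p (weighted_diracs k (\<lambda>i. measure p (C \<omega> i) / (\<Sum>j<k. measure p (C \<omega> j))) (\<lambda>i. X i \<omega>))
            \<le> G (Y \<omega>)" if \<omega>: "\<omega> \<in> space M" for \<omega>
  proof -
    have "(\<Sum>j<k. measure p (C \<omega> j)) = measure p (\<Union>j<k. C \<omega> j)"
      using C_sets[OF \<omega>] C_disj[OF \<omega>] p_borel
      by (intro measure_finite_Union[symmetric]) (auto simp: disjoint_family_on_def)
    also have "\<dots> = measure p (\<Union>i<k. ball (X i \<omega>) \<epsilon>)" using C_union[OF \<omega>] by simp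
    also have "(\<Union>i<k. ball (X i \<omega>) \<epsilon>) = (\<Union>i\<in>{1..k}. ball (Y \<omega> i) \<epsilon>)"
    proof (intro set_eqI iffI)
      fix y assume "y \<in> (\<Union>i<k. ball (X i \<omega>) \<epsilon>)"
      then obtain i where "i < k" "y \<in> ball (X i \<omega>) \<epsilon>" by auto
      then show "y \<in> (\<Union>i\<in>{1..k}. ball (Y \<omega> i) \<epsilon>)" unfolding Y_def
        by (intro UN_I[of "Suc i"]) auto
    next
      fix y assume "y \<in> (\<Union>i\<in>{1..k}. ball (Y \<omega> i) \<epsilon>)"
      then obtain i where "i \<in> {1..k}" "y \<in> ball (Y \<omega> i) \<epsilon>" by auto
      then show "y \<in> (\<Union>i<k. ball (X i \<omega>) \<epsilon>)" unfolding Y_def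
        by (intro UN_I[of "i - 1"]) auto
    qed
    finally have m: "(\<Sum>j<k. measure p (C \<omega> j)) = h (Y \<omega>)" unfolding h_def .
    show ?thesis
      using pointwise_bound[where x="\<lambda>i. X i \<omega>" and k=k and C="C \<omega>", OF p_prob p_borel _ C_sets[OF \<omega>] C_disj[OF \<omega>] C_sub[OF \<omega>]] eps
      unfolding m G_def by simp
  qed
  have step1: "(\<integral>\<^sup>+ \<omega>. ennreal (d_BL p
            (weighted_diracs k
               (\<lambda>i. measure p (C \<omega> i) / (\<Sum>j<k. measure p (C \<omega> j)))
               (\<lambda>i. X i \<omega>))) \<partial>M) \<le> (\<integral>\<^sup>+ \<omega>. ennreal (G (Y \<omega>)) \<partial>M)"
    using pw by (intro nn_integral_mono ennreal_leI) auto
  show ?thesis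
  proof (cases "k = 0")
    case True
    have "p_cover p \<epsilon> k = 0" unfolding p_cover_def True by simp
    moreover have "G f = 2" for f unfolding G_def h_def True by simp
    ultimately show ?thesis using step1 by (simp add: MP.emeasure_space_1)
  next
    case False
    define Z where "Z \<omega> = (\<lambda>i\<in>{..<k}. X i \<omega>)" for \<omega>
    define r where "r \<omega> = (\<lambda>n\<in>{1..k}. \<omega> (n - 1))" for \<omega> :: "nat \<Rightarrow> 'a"
    have Zm: "Z \<in> measurable M (PiM {..<k} (\<lambda>_. p))"
      unfolding Z_def using Xp by (intro measurable_restrict) auto
    have rm: "r \<in> measurable (PiM {..<k} (\<lambda>_. p)) N"
      unfolding r_def N_def using False by (intro measurable_restrict measurable_component_singleton) auto
    have Ym: "Y \<in> measurable M N"
      unfolding Y_def N_def using Xp by (intro measurable_restrict) auto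
    have distZ: "distr M (PiM {..<k} (\<lambda>_. p)) Z = PiM {..<k} (\<lambda>_. p)"
    proof -
      have "distr M (PiM {..<k} (\<lambda>_. borel)) Z = PiM {..<k} (\<lambda>i. distr M borel (X i))"
        unfolding Z_def using False X_meas X_indep
        by (intro MP.indep_vars_iff_distr_eq_PiM'[THEN iffD1]) auto
      also have "\<dots> = PiM {..<k} (\<lambda>_. p)" using X_law by (intro PiM_cong) auto
      also have "distr M (PiM {..<k} (\<lambda>_. borel)) Z = distr M (PiM {..<k} (\<lambda>_. p)) Z"
        using p_borel by (intro distr_cong sets_PiM_cong) auto
      finally show ?thesis .
    qed
    have distY: "distr M N Y = N"
    proof -
      have "distr M N Y = distr M N (r \<circ> Z)"
        by (intro distr_cong) (auto simp: Y_def r_def Z_def fun_eq_iff)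
      also have "\<dots> = distr (distr M (PiM {..<k} (\<lambda>_. p)) Z) N r"
        by (rule distr_distr[symmetric, OF rm Zm])
      also have "\<dots> = N" unfolding distZ r_def N_def
      proof -
        have inj: "inj_on (\<lambda>n::nat. n - 1) {1..k}" by (auto simp: inj_on_def)
        have pi: "(\<lambda>n::nat. n - 1) \<in> {1..k} \<rightarrow> {..<k}" by auto
        show "distr (PiM {..<k} (\<lambda>_. p)) (PiM {1..k} (\<lambda>_. p)) (\<lambda>\<omega>. \<lambda>n\<in>{1..k}. \<omega> (n - 1)) = PiM {1..k} (\<lambda>_. p)"
          using distr_PiM_reindex[of "{..<k}" "\<lambda>_. p", OF _ inj pi] p_prob by simp
      qed
      finally show ?thesis .
    qed
    interpret PSF: pair_prob_space p N by unfold_locales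
    define Q where "Q = (\<Union>i\<in>{1..k}. {z \<in> space (p \<Otimes>\<^sub>M N). dist (snd z i) (fst z) < \<epsilon>})"
    have Qs: "Q \<in> sets (p \<Otimes>\<^sub>M N)"
    proof -
      have "{z \<in> space (p \<Otimes>\<^sub>M N). dist (snd z i) (fst z) < \<epsilon>} \<in> sets (p \<Otimes>\<^sub>M N)" if i: "i \<in> {1..k}" for i
      proof -
        have f: "fst \<in> borel_measurable (p \<Otimes>\<^sub>M N)"
          using measurable_fst[of p N] by (simp add: measurable_cong_sets[OF refl p_borel])
        have "(\<lambda>z. snd z i) \<in> measurable (p \<Otimes>\<^sub>M N) p"
          using measurable_compose[OF measurable_snd measurable_component_singleton[OF i], of p "\<lambda>_. p"]
          unfolding N_def by simp
        then have s: "(\<lambda>z. snd z i) \<in> borel_measurable (p \<Otimes>\<^sub>M N)"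
          by (simp add: measurable_cong_sets[OF refl p_borel])
        have [measurable]: "(\<lambda>z. dist (snd z i) (fst z)) \<in> borel_measurable (p \<Otimes>\<^sub>M N)"
          using borel_measurable_dist[OF s f] .
        show ?thesis by measurable
      qed
      then show ?thesis unfolding Q_def by (intro sets.finite_UN) auto
    qed
    have Qpre: "(\<lambda>x. (x, f)) -` Q = (\<Union>i\<in>{1..k}. ball (f i) \<epsilon>)" if "f \<in> space N" for f
      unfolding Q_def using that by (auto simp: space_pair_measure space_p mem_ball Bex_def)
    have hm: "h \<in> borel_measurable N"
    proof -
      have "(\<lambda>f. emeasure p ((\<lambda>x. (x, f)) -` Q)) \<in> borel_measurable N"
        by (rule PSF.measurable_emeasure_Pair2[OF Qs])
      then have m: "(\<lambda>f. enn2real (emeasure p ((\<lambda>x. (x, f)) -` Q))) \<in> borel_measurable N" by measurable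
      have eq: "\<And>f. f \<in> space N \<Longrightarrow> h f = enn2real (emeasure p ((\<lambda>x. (x, f)) -` Q))"
        by (simp add: Qpre h_def measure_def)
      show ?thesis using measurable_cong[of N h, OF eq] m by simp
    qed
    have hint: "integrable N h" using hm h01 by (intro PN.integrable_const_bound[where B=1]) auto
    have pc: "p_cover p \<epsilon> k = (\<integral>f. h f \<partial>N)"
    proof -
      have ins: "{..k} = insert 0 {1..k}" by auto
      define E where "E = {\<omega> \<in> space (PiM {..k} (\<lambda>_. p)). \<omega> 0 \<in> (\<Union>i\<in>{1..k}. ball (\<omega> i) \<epsilon>)}"
      have g: "(\<lambda>(x, X). X(0 := x)) \<in> measurable (p \<Otimes>\<^sub>M N) (PiM {..k} (\<lambda>_. p))"
        unfolding N_def ins by measurable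
      have Es: "E \<in> sets (PiM {..k} (\<lambda>_. p))"
      proof -
        have "{\<omega> \<in> space (PiM {..k} (\<lambda>_. p)). dist (\<omega> i) (\<omega> 0) < \<epsilon>} \<in> sets (PiM {..k} (\<lambda>_. p))" if i: "i \<in> {1..k}" for i
        proof -
          have c: "(\<lambda>\<omega>. \<omega> j) \<in> borel_measurable (PiM {..k} (\<lambda>_. p))" if "j \<le> k" for j
            using measurable_component_singleton[of j "{..k}" "\<lambda>_. p"] that
            by (simp add: measurable_cong_sets[OF refl p_borel])
          have [measurable]: "(\<lambda>\<omega>. dist (\<omega> i) (\<omega> 0)) \<in> borel_measurable (PiM {..k} (\<lambda>_. p))"
            using i by (intro borel_measurable_dist c) auto
          show ?thesis by measurable
        qed
        moreover have "E = (\<Union>i\<in>{1..k}. {\<omega> \<in> space (PiM {..k} (\<lambda>_. p)). dist (\<omega> i) (\<omega> 0) < \<epsilon>})"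
          unfolding E_def by (auto simp: mem_ball)
        ultimately show ?thesis by (auto intro!: sets.finite_UN)
      qed
      have pre: "(\<lambda>(x, X). X(0 := x)) -` E \<inter> space (p \<Otimes>\<^sub>M N) = Q"
      proof -
        have gsp: "\<And>a b. (a, b) \<in> space (p \<Otimes>\<^sub>M N) \<Longrightarrow> b(0 := a) \<in> space (PiM {..k} (\<lambda>_. p))"
          using measurable_space[OF g] by fastforce
        show ?thesis unfolding E_def Q_def using gsp by (auto simp: mem_ball Bex_def)
      qed
      have D: "distr (p \<Otimes>\<^sub>M N) (PiM {..k} (\<lambda>_. p)) (\<lambda>(x, X). X(0 := x)) = PiM {..k} (\<lambda>_. p)"
        unfolding N_def ins using distr_pair_PiM_eq_PiM[of "{1..k}" "\<lambda>_. p" 0] p_prob by simp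
      have "p_cover p \<epsilon> k = measure (PiM {..k} (\<lambda>_. p)) E" unfolding p_cover_def E_def ..
      also have "\<dots> = measure (distr (p \<Otimes>\<^sub>M N) (PiM {..k} (\<lambda>_. p)) (\<lambda>(x, X). X(0 := x))) E"
        using D by simp
      also have "\<dots> = measure (p \<Otimes>\<^sub>M N) Q" using measure_distr[OF g Es] pre by simp
      also have "\<dots> = enn2real (\<integral>\<^sup>+f. emeasure p ((\<lambda>x. (x, f)) -` Q) \<partial>N)"
        by (simp add: measure_def PSF.emeasure_pair_measure_alt2[OF Qs])
      also have "(\<integral>\<^sup>+f. emeasure p ((\<lambda>x. (x, f)) -` Q) \<partial>N) = (\<integral>\<^sup>+f. ennreal (h f) \<partial>N)"
        by (intro nn_integral_cong) (simp add: Qpre h_def P.emeasure_eq_measure)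
      also have "\<dots> = ennreal (\<integral>f. h f \<partial>N)" using hint h01 by (intro nn_integral_eq_integral) auto
      finally show ?thesis using h01 by (simp add: Bochner_Integration.integral_nonneg)
    qed
    have Gm: "G \<in> borel_measurable N" unfolding G_def using hm by measurable
    have G0: "0 \<le> G f" for f using h01[of f] eps unfolding G_def by simp
    have Geq: "G = (\<lambda>f. 2 + (\<epsilon> - 2) * h f)" by (auto simp: G_def algebra_simps fun_eq_iff)
    have Gint: "integrable N G" unfolding Geq using hint by simp
    have "(\<integral>\<^sup>+\<omega>. ennreal (G (Y \<omega>)) \<partial>M) = (\<integral>\<^sup>+f. ennreal (G f) \<partial>N)"
      using nn_integral_distr[OF Ym, of "\<lambda>f. ennreal (G f)"] distY Gm by simp
    also have "\<dots> = ennreal (\<integral>f. G f \<partial>N)" using Gint G0 by (intro nn_integral_eq_integral) auto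
    also have "(\<integral>f. G f \<partial>N) = \<epsilon> * p_cover p \<epsilon> k + 2 * (1 - p_cover p \<epsilon> k)"
    proof -
      have "(\<integral>f. G f \<partial>N) = (\<integral>f. 2 \<partial>N) + (\<integral>f. (\<epsilon> - 2) * h f \<partial>N)"
        unfolding Geq using hint by (intro Bochner_Integration.integral_add) auto
      also have "\<dots> = 2 + (\<epsilon> - 2) * (\<integral>f. h f \<partial>N)" by (simp add: PN.prob_space)
      finally show ?thesis unfolding pc by (simp add: algebra_simps)
    qed
    finally show ?thesis using step1 by simp
  qed
qed

end
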